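(* Let $L\ge 1$ and $N_\nu\ge 1$ be integers. Suppose there are finitely many paths indexed by $l$, each with a path metric $\mathrm{PM}_l\in\mathbb{R}$ and an LLR vector $\alpha_l=(\alpha_{0,l},\dots,\alpha_{N_\nu-1,l})\in(\mathbb{R}\setminus\{0\})^{N_\nu}$. Assume that for each $l$ the absolute values $|\alpha_{i,l}|$ are pairwise distinct and that the entries are indexed so that $|\alpha_{0,l}|<|\alpha_{1,l}|<\dots<|\alpha_{N_\nu-1,l}|$. A candidate is a pair $(l,\eta)$ with $\eta\in\{+1,-1\}^{N_\nu}$, and its metric is $$M(l,\eta)=\mathrm{PM}_l+\sum_{i=0}^{N_\nu-1}\ln\left(1+e^{-\eta_i\alpha_{i,l}}\right).$$ If a candidate $(l,\eta)$ has $\eta_k\neq \operatorname{sgn}(\alpha_{k,l})$ for some index $k\ge L-1$, then there exist at least $L$ candidates of the form $(l,\eta')$ with $\eta'\neq\eta$ and $M(l,\eta')<M(l,\eta)$. Consequently, every candidate $(l,\eta)$ belonging to some set of $L$ candidates of smallest metric (the set of survivors of successive-cancellation list decoding with list size $L$ over a Rate-1 node) satisfies $\eta_i=\operatorname{sgn}(\alpha_{i,l})$ for all $i\ge L-1$. In other words, path splitting is needed at most at the $\min(L-1,N_\nu)$ least reliable positions of each path, and all remaining bits equal the hard decision on the LLR ($\beta_{i,l}=0$ if $\alpha_{i,l}\ge0$, and $1$ otherwise).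
   Context: Setting: list decoding of a Rate-1 constituent code (all $N_\nu$ bits are information bits) of a polar code. A bit estimate $\beta\in\{0,1\}$ is encoded as $\eta=1-2\beta\in\{+1,-1\}$. $\operatorname{sgn}$ denotes the sign function. In successive-cancellation list decoding with list size $L$, the $L$ candidates of smallest path metric survive. The ordering of LLRs by increasing absolute value is the reliability order, with index $0$ the least reliable. *)

theory Defs
  imports Complex_Main
begin

definition cands :: "'p set \<Rightarrow> nat \<Rightarrow> ('p \<times> real list) set" where
  "cands P N = {(l, eta). l \<in> P \<and> length eta = N \<and> set eta \<subseteq> {1, -1}}"

definition metric :: "('p \<Rightarrow> real) \<Rightarrow> ('p \<Rightarrow> nat \<Rightarrow> real) \<Rightarrow> nat \<Rightarrow> 'p \<Rightarrow> real list \<Rightarrow> real" where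
  "metric PM alpha N l eta = PM l + (\<Sum>i<N. ln (1 + exp (- (eta ! i) * alpha l i)))"

definition survivor_set ::
  "'p set \<Rightarrow> ('p \<Rightarrow> real) \<Rightarrow> ('p \<Rightarrow> nat \<Rightarrow> real) \<Rightarrow> nat \<Rightarrow> nat \<Rightarrow> ('p \<times> real list) set \<Rightarrow> bool" where
  "survivor_set P PM alpha N L S \<longleftrightarrow>
     S \<subseteq> cands P N \<and> card S = min L (card (cands P N)) \<and>
     (\<forall>c\<in>S. \<forall>c'\<in>cands P N - S.
        metric PM alpha N (fst c) (snd c) \<le> metric PM alpha N (fst c') (snd c'))"

end

theory Submission
  imports Defs
begin

lemma term_eq:
  fixes e a :: real
  assumes "e \<in> {1, -1}" "a \<noteq> 0"
  shows "ln (1 + exp (- e * a)) = ln (1 + exp (- \<bar>a\<bar>)) + (if e = sgn a then 0 else \<bar>a\<bar>)"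
proof -
  have key: "ln (1 + exp x) = x + ln (1 + exp (-x))" for x :: real
  proof -
    have "1 + exp x = exp x * (1 + exp (-x))" by (simp add: distrib_left exp_minus field_simps)
    moreover have "0 < 1 + exp (-x)" by (simp add: add_pos_pos)
    ultimately show ?thesis by (simp add: ln_mult)
  qed
  consider "a > 0" "e = 1" | "a > 0" "e = -1" | "a < 0" "e = 1" | "a < 0" "e = -1"
    using assms by force
  then show ?thesis
  proof cases
    case 2 then show ?thesis using key[of a] by simp
  next
    case 3 then show ?thesis using key[of "-a"] by simp
  qed auto
qed

lemma metric_upd:
  assumes "i < N" "length eta = N"
  shows "metric PM alpha N l (eta[i := x]) = metric PM alpha N l eta
            - ln (1 + exp (- (eta ! i) * alpha l i)) + ln (1 + exp (- x * alpha l i))"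
proof -
  have A: "(\<Sum>j<N. ln (1 + exp (- (eta[i:=x] ! j) * alpha l j)))
     = ln (1 + exp (- x * alpha l i)) + (\<Sum>j\<in>{..<N}-{i}. ln (1 + exp (- (eta ! j) * alpha l j)))"
    using assms by (simp add: sum.remove[of "{..<N}" i])
  have B: "(\<Sum>j<N. ln (1 + exp (- (eta ! j) * alpha l j)))
     = ln (1 + exp (- (eta ! i) * alpha l i)) + (\<Sum>j\<in>{..<N}-{i}. ln (1 + exp (- (eta ! j) * alpha l j)))"
    using assms by (simp add: sum.remove[of "{..<N}" i])
  show ?thesis unfolding metric_def using A B by simp
qed

lemma finite_etas: "finite {eta :: real list. length eta = N \<and> set eta \<subseteq> {1, -1}}"
  using finite_lists_length_eq[of "{1, -1::real}" N] by (simp add: conj_commute)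

lemma part1:
  fixes P :: "'p set" and PM :: "'p \<Rightarrow> real" and alpha :: "'p \<Rightarrow> nat \<Rightarrow> real"
    and L N :: nat
  assumes "L \<ge> 1"
    and nonzero: "\<forall>l\<in>P. \<forall>i<N. alpha l i \<noteq> 0"
    and sorted: "\<forall>l\<in>P. \<forall>i j. i < j \<and> j < N \<longrightarrow> \<bar>alpha l i\<bar> < \<bar>alpha l j\<bar>"
    and c: "(l, eta) \<in> cands P N" "L - 1 \<le> k" "k < N" "eta ! k \<noteq> sgn (alpha l k)"
  shows "L \<le> card {eta'. (l, eta') \<in> cands P N \<and> eta' \<noteq> eta \<and>
                               metric PM alpha N l eta' < metric PM alpha N l eta}"
proof -
  have lP: "l \<in> P" and len: "length eta = N" and st: "set eta \<subseteq> {1, -1}"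
    using c(1) by (auto simp: cands_def)
  have nz: "\<And>i. i < N \<Longrightarrow> alpha l i \<noteq> 0" using nonzero lP by auto
  have srt: "\<And>i j. i < j \<Longrightarrow> j < N \<Longrightarrow> \<bar>alpha l i\<bar> < \<bar>alpha l j\<bar>" using sorted lP by auto
  have sgn_in: "\<And>i. i < N \<Longrightarrow> sgn (alpha l i) \<in> {1, -1}"
    using nz by (auto simp: sgn_real_def)
  have eta_in: "\<And>i. i < N \<Longrightarrow> eta ! i \<in> {1, -1}" using st len nth_mem by blast
  define M where "M = metric PM alpha N l"
  define e1 where "e1 = eta[k := sgn (alpha l k)]"
  define e2 where "e2 = (\<lambda>j. e1[j := - (e1 ! j)])"
  have len1: "length e1 = N" using len by (simp add: e1_def)
  have e1_in: "\<And>i. i < N \<Longrightarrow> e1 ! i \<in> {1, -1}"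
  proof -
    fix i assume "i < N"
    then show "e1 ! i \<in> {1, -1}" using eta_in[of i] sgn_in[of i] len
      by (cases "i = k") (auto simp: e1_def)
  qed
  have M1: "M e1 = M eta - \<bar>alpha l k\<bar>"
    unfolding M_def e1_def using metric_upd[OF c(3) len, of PM alpha l "sgn (alpha l k)"]
      term_eq[OF eta_in[OF c(3)] nz[OF c(3)]] term_eq[OF sgn_in[OF c(3)] nz[OF c(3)]] c(4)
    by simp
  have M2: "M (e2 j) < M eta" if j: "j < L - 1" for j
  proof -
    have jN: "j < N" "j < k" using j c by auto
    have "M (e2 j) = M e1 - ln (1 + exp (- (e1 ! j) * alpha l j)) + ln (1 + exp (- (- (e1 ! j)) * alpha l j))"
      unfolding M_def e2_def using metric_upd[OF jN(1) len1, of PM alpha l "- (e1 ! j)"] by simp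
    also have "\<dots> \<le> M e1 + \<bar>alpha l j\<bar>"
    proof -
      have "- (e1 ! j) \<in> {1, -1}" using e1_in[OF jN(1)] by auto
      then show ?thesis
        using term_eq[OF e1_in[OF jN(1)] nz[OF jN(1)]] term_eq[of "- (e1 ! j)", OF _ nz[OF jN(1)]]
        by (auto split: if_splits)
    qed
    also have "\<dots> < M eta" using M1 srt[OF jN(2) c(3)] by simp
    finally show ?thesis .
  qed
  have e1ne: "e1 \<noteq> eta"
  proof
    assume "e1 = eta" then have "e1 ! k = eta ! k" by simp
    then show False using c(4) len c(3) by (simp add: e1_def)
  qed
  have e2ne: "e2 j \<noteq> eta" if "j < L - 1" for j
  proof
    assume "e2 j = eta" then have "e2 j ! k = eta ! k" by simp
    moreover have "j \<noteq> k" "j < N" using that c by auto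
    ultimately show False using c(4) len c(3) by (simp add: e2_def e1_def nth_list_update)
  qed
  have e2_e1: "e2 j \<noteq> e1" if "j < N" for j
  proof
    assume "e2 j = e1" then have "e2 j ! j = e1 ! j" by simp
    then show False using that len1 e1_in[OF that] by (auto simp: e2_def)
  qed
  have inj: "inj_on e2 {..<L-1}"
  proof (rule inj_onI)
    fix a b assume ab: "a \<in> {..<L-1}" "b \<in> {..<L-1}" "e2 a = e2 b"
    show "a = b"
    proof (rule ccontr)
      assume "a \<noteq> b"
      have aN: "a < N" using ab c by auto
      from ab(3) have "e2 a ! a = e2 b ! a" by simp
      then show False using \<open>a \<noteq> b\<close> aN len1 e1_in[OF aN] by (auto simp: e2_def nth_list_update)
    qed
  qed
  have cand_ok: "(l, x) \<in> cands P N" if "length x = N" "\<And>i. i < N \<Longrightarrow> x ! i \<in> {1, -1}" for x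
    using that lP unfolding cands_def by (force simp: in_set_conv_nth)
  have e1c: "(l, e1) \<in> cands P N" using cand_ok[OF len1 e1_in] .
  have e2c: "(l, e2 j) \<in> cands P N" if "j < N" for j
  proof (rule cand_ok)
    show "length (e2 j) = N" using len1 by (simp add: e2_def)
    fix i assume "i < N" then show "e2 j ! i \<in> {1, -1}"
      using e1_in len1 that by (auto simp: e2_def nth_list_update)
  qed
  define T where "T = {eta'. (l, eta') \<in> cands P N \<and> eta' \<noteq> eta \<and>
                               metric PM alpha N l eta' < metric PM alpha N l eta}"
  have sub: "insert e1 (e2 ` {..<L-1}) \<subseteq> T"
    unfolding T_def using e1c e1ne M1 e2c e2ne M2 c(2,3) nz[OF c(3)] unfolding M_def
    by (auto intro!: e2c)
  have finT: "finite T"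
    by (rule finite_subset[OF _ finite_etas[of N]]) (auto simp: T_def cands_def)
  have "card (insert e1 (e2 ` {..<L-1})) = L"
  proof -
    have "e1 \<notin> e2 ` {..<L-1}"
    proof
      assume "e1 \<in> e2 ` {..<L-1}"
      then obtain j where "j < L - 1" "e1 = e2 j" by auto
      moreover have "j < N" using \<open>j < L - 1\<close> c by auto
      ultimately show False using e2_e1[of j] by simp
    qed
    then have "card (insert e1 (e2 ` {..<L-1})) = Suc (card (e2 ` {..<L-1}))" by simp
    also have "\<dots> = Suc (L - 1)" using card_image[OF inj] by simp
    finally show ?thesis using assms(1) by simp
  qed
  then show ?thesis using card_mono[OF finT sub] unfolding T_def by simp
qed

theorem theorem1:
  fixes P :: "'p set" and PM :: "'p \<Rightarrow> real" and alpha :: "'p \<Rightarrow> nat \<Rightarrow> real"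
    and L N :: nat
  assumes "L \<ge> 1" and "N \<ge> 1" and "finite P"
    and nonzero: "\<forall>l\<in>P. \<forall>i<N. alpha l i \<noteq> 0"
    and sorted: "\<forall>l\<in>P. \<forall>i j. i < j \<and> j < N \<longrightarrow> \<bar>alpha l i\<bar> < \<bar>alpha l j\<bar>"
  shows "(\<forall>l eta k. (l, eta) \<in> cands P N \<and> L - 1 \<le> k \<and> k < N \<and> eta ! k \<noteq> sgn (alpha l k)
            \<longrightarrow> L \<le> card {eta'. (l, eta') \<in> cands P N \<and> eta' \<noteq> eta \<and>
                               metric PM alpha N l eta' < metric PM alpha N l eta})
       \<and> (\<forall>S. survivor_set P PM alpha N L S \<longrightarrow>
            (\<forall>(l, eta)\<in>S. \<forall>i. L - 1 \<le> i \<and> i < N \<longrightarrow> eta ! i = sgn (alpha l i)))"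
proof (intro conjI allI impI)
  fix l eta k
  assume "(l, eta) \<in> cands P N \<and> L - 1 \<le> k \<and> k < N \<and> eta ! k \<noteq> sgn (alpha l k)"
  then show "L \<le> card {eta'. (l, eta') \<in> cands P N \<and> eta' \<noteq> eta \<and>
                               metric PM alpha N l eta' < metric PM alpha N l eta}"
    using part1[OF assms(1) nonzero sorted] by blast
next
  fix S assume surv: "survivor_set P PM alpha N L S"
  have finC: "finite (cands P N)"
    by (rule finite_subset[OF _ finite_cartesian_product[OF assms(3) finite_etas[of N]]])
       (auto simp: cands_def)
  show "\<forall>(l, eta)\<in>S. \<forall>i. L - 1 \<le> i \<and> i < N \<longrightarrow> eta ! i = sgn (alpha l i)"
  proof (clarify, rule ccontr)
    fix l eta i
    assume inS: "(l, eta) \<in> S" and i: "L - 1 \<le> i" "i < N" and ne: "eta ! i \<noteq> sgn (alpha l i)"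
    have SC: "S \<subseteq> cands P N" and cardS: "card S = min L (card (cands P N))"
      and opt: "\<forall>c\<in>S. \<forall>c'\<in>cands P N - S. metric PM alpha N (fst c) (snd c) \<le> metric PM alpha N (fst c') (snd c')"
      using surv unfolding survivor_set_def by auto
    define T where "T = {eta'. (l, eta') \<in> cands P N \<and> eta' \<noteq> eta \<and>
                               metric PM alpha N l eta' < metric PM alpha N l eta}"
    have LT: "L \<le> card T" unfolding T_def
      using part1[OF assms(1) nonzero sorted] inS SC i ne by blast
    define U where "U = insert (l, eta) (Pair l ` T)"
    have UC: "U \<subseteq> cands P N" using inS SC by (auto simp: U_def T_def)
    have finT: "finite T"
      by (rule finite_subset[OF _ finite_etas[of N]]) (auto simp: T_def cands_def)
    have cU: "card U = Suc (card T)"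
    proof -
      have "(l, eta) \<notin> Pair l ` T" by (auto simp: T_def)
      moreover have "card (Pair l ` T) = card T" by (simp add: card_image inj_on_def)
      ultimately show ?thesis unfolding U_def using finT by simp
    qed
    have "card U \<le> card (cands P N)" using card_mono[OF finC UC] .
    then have cS: "card S = L" using cardS LT cU by simp
    have US: "U \<subseteq> S"
    proof
      fix c assume "c \<in> U"
      show "c \<in> S"
      proof (rule ccontr)
        assume "c \<notin> S"
        then have cne: "c \<noteq> (l, eta)" using inS by auto
        then obtain e where c: "c = (l, e)" "e \<in> T" using \<open>c \<in> U\<close> by (auto simp: U_def)
        have "c \<in> cands P N - S" using \<open>c \<in> U\<close> UC \<open>c \<notin> S\<close> by auto
        then have "metric PM alpha N l eta \<le> metric PM alpha N l e" using opt inS c by force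
        then show False using c(2) by (simp add: T_def)
      qed
    qed
    have "card U \<le> card S" using card_mono[OF finite_subset[OF SC finC] US] .
    then show False using cS cU LT by simp
  qed
qed

end
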